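(* Let $\kappa\in\mathbb{K}$, let $(\mathfrak{g},[-,-]_\mathfrak{g},\alpha_\mathfrak{g})$ and $(\mathfrak{h},[-,-]_\mathfrak{h},\alpha_\mathfrak{h})$ be Hom-Lie algebras, $\rho$ an action of $\mathfrak{g}$ on $\mathfrak{h}$, and $\mathcal{A}:\mathfrak{h}\to\mathfrak{g}$ a $\kappa$-weighted $\mathcal{O}$-operator with respect to $\rho$. Then: (i) $(\mathfrak{h},[-,-],\star,\alpha_\mathfrak{h})$ is a Hom-post-Lie algebra, where $[u,v]=\kappa[u,v]_\mathfrak{h}$ and $u\star v=\rho(\mathcal{A}u)v$; (ii) $(\mathfrak{h},[-,-]_\mathcal{A},\alpha_\mathfrak{h})$ is a Hom-Lie algebra, where $[u,v]_\mathcal{A}=\rho(\mathcal{A}u)v-\rho(\mathcal{A}v)u+\kappa[u,v]_\mathfrak{h}$, and $\mathcal{A}$ is a Hom-Lie algebra homomorphism from $(\mathfrak{h},[-,-]_\mathcal{A},\alpha_\mathfrak{h})$ to $(\mathfrak{g},[-,-]_\mathfrak{g},\alpha_\mathfrak{g})$; (iii) the map $\mathrm{ad}:\mathfrak{h}\to\mathrm{End}(\mathfrak{h})$, $\mathrm{ad}(u)v=u\star v=\rho(\mathcal{A}u)v$, is an action of the Hom-Lie algebra $(\mathfrak{h},[-,-]_\mathcal{A},\alpha_\mathfrak{h})$ on the Hom-Lie algebra $(\mathfrak{h},[-,-]_\mathfrak{h},\alpha_\mathfrak{h})$.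
   Context: All vector spaces are over a field $\mathbb{K}$ of characteristic zero. A Hom-Lie algebra $(\mathfrak{g},[-,-]_\mathfrak{g},\alpha_\mathfrak{g})$ is a vector space with a skew-symmetric bilinear bracket and a linear map $\alpha_\mathfrak{g}$ with $\alpha_\mathfrak{g}([x,y]_\mathfrak{g})=[\alpha_\mathfrak{g}(x),\alpha_\mathfrak{g}(y)]_\mathfrak{g}$ satisfying $[\alpha_\mathfrak{g}(x),[y,z]_\mathfrak{g}]_\mathfrak{g}+[\alpha_\mathfrak{g}(y),[z,x]_\mathfrak{g}]_\mathfrak{g}+[\alpha_\mathfrak{g}(z),[x,y]_\mathfrak{g}]_\mathfrak{g}=0$. A homomorphism $\varphi$ of Hom-Lie algebras satisfies $\varphi\circ\alpha_1=\alpha_2\circ\varphi$ and $\varphi([x,y]_1)=[\varphi x,\varphi y]_2$. A representation of a Hom-Lie algebra $\mathfrak{g}$ on $(\mathfrak{h},\alpha_\mathfrak{h})$ ($\mathfrak{h}$ a vector space, $\alpha_\mathfrak{h}$ linear) is a linear map $\rho:\mathfrak{g}\to\mathrm{End}(\mathfrak{h})$ with $\rho(\alpha_\mathfrak{g}(x))\circ\alpha_\mathfrak{h}=\alpha_\mathfrak{h}\circ\rho(x)$ and $\rho([x,y]_\mathfrak{g})\circ\alpha_\mathfrak{h}=\rho(\alpha_\mathfrak{g}(x))\circ\rho(y)-\rho(\alpha_\mathfrak{g}(y))\circ\rho(x)$. An action of $\mathfrak{g}$ on a Hom-Lie algebra $(\mathfrak{h},[-,-]_\mathfrak{h},\alpha_\mathfrak{h})$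 is a representation $\rho$ on $(\mathfrak{h},\alpha_\mathfrak{h})$ such that for all $x\in\mathfrak{g}$, $u,v\in\mathfrak{h}$: $\rho(\alpha_\mathfrak{g}(x))[u,v]_\mathfrak{h}=[\rho(x)u,\alpha_\mathfrak{h}(v)]_\mathfrak{h}+[\alpha_\mathfrak{h}(u),\rho(x)v]_\mathfrak{h}$ and $[\rho(x)u,\alpha_\mathfrak{h}(v)]_\mathfrak{h}=0$. A $\kappa$-weighted $\mathcal{O}$-operator from $\mathfrak{h}$ to $\mathfrak{g}$ with respect to an action $\rho$ is a linear map $\mathcal{A}:\mathfrak{h}\to\mathfrak{g}$ with $\mathcal{A}\circ\alpha_\mathfrak{h}=\alpha_\mathfrak{g}\circ\mathcal{A}$ and $[\mathcal{A}u,\mathcal{A}v]_\mathfrak{g}=\mathcal{A}(\rho(\mathcal{A}u)v-\rho(\mathcal{A}v)u+\kappa[u,v]_\mathfrak{h})$ for all $u,v\in\mathfrak{h}$. A Hom-post-Lie algebra $(\mathfrak{h},[-,-],\star,\alpha_\mathfrak{h})$ is a Hom-Lie algebra $(\mathfrak{h},[-,-],\alpha_\mathfrak{h})$ with a bilinear map $\star$ such that $\alpha_\mathfrak{h}(u\star v)=\alpha_\mathfrak{h}(u)\star\alpha_\mathfrak{h}(v)$ and for all $u,v,w$: $\alpha_\mathfrak{h}(u)\star[v,w]=[u\star v,\alpha_\mathfrak{h}(w)]+[\alpha_\mathfrak{h}(v),u\star w]$; $([u,v]+u\star v-v\star u)\star\alpha_\mathfrak{h}(w)=\alpha_\mathfrak{h}(u)\star(v\star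 w)-\alpha_\mathfrak{h}(v)\star(u\star w)$; $\alpha_\mathfrak{h}(u)\star[v,w]=[u\star v,\alpha_\mathfrak{h}(w)]=0$. *)

theory Defs
  imports Complex_Main
begin

definition bilinear_map ::
  "('k::field \<Rightarrow> 'a::ab_group_add \<Rightarrow> 'a) \<Rightarrow> ('k \<Rightarrow> 'b::ab_group_add \<Rightarrow> 'b) \<Rightarrow>
   ('k \<Rightarrow> 'c::ab_group_add \<Rightarrow> 'c) \<Rightarrow> ('a \<Rightarrow> 'b \<Rightarrow> 'c) \<Rightarrow> bool" where
  "bilinear_map s1 s2 s3 f \<longleftrightarrow>
     (\<forall>y. Vector_Spaces.linear s1 s3 (\<lambda>x. f x y)) \<and>
     (\<forall>x. Vector_Spaces.linear s2 s3 (\<lambda>y. f x y))"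

definition hom_lie_algebra ::
  "('k::field \<Rightarrow> 'g::ab_group_add \<Rightarrow> 'g) \<Rightarrow> ('g \<Rightarrow> 'g \<Rightarrow> 'g) \<Rightarrow> ('g \<Rightarrow> 'g) \<Rightarrow> bool" where
  "hom_lie_algebra sc br al \<longleftrightarrow>
     vector_space sc \<and>
     bilinear_map sc sc sc br \<and>
     Vector_Spaces.linear sc sc al \<and>
     (\<forall>x y. br x y = - br y x) \<and>
     (\<forall>x y. al (br x y) = br (al x) (al y)) \<and>
     (\<forall>x y z. br (al x) (br y z) + br (al y) (br z x) + br (al z) (br x y) = 0)"

definition hom_lie_hom ::
  "('k::field \<Rightarrow> 'g::ab_group_add \<Rightarrow> 'g) \<Rightarrow> ('g \<Rightarrow> 'g \<Rightarrow> 'g) \<Rightarrow> ('g \<Rightarrow> 'g) \<Rightarrow>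
   ('k \<Rightarrow> 'h::ab_group_add \<Rightarrow> 'h) \<Rightarrow> ('h \<Rightarrow> 'h \<Rightarrow> 'h) \<Rightarrow> ('h \<Rightarrow> 'h) \<Rightarrow>
   ('g \<Rightarrow> 'h) \<Rightarrow> bool" where
  "hom_lie_hom s1 br1 al1 s2 br2 al2 \<phi> \<longleftrightarrow>
     Vector_Spaces.linear s1 s2 \<phi> \<and>
     (\<forall>x. \<phi> (al1 x) = al2 (\<phi> x)) \<and>
     (\<forall>x y. \<phi> (br1 x y) = br2 (\<phi> x) (\<phi> y))"

definition hom_lie_rep ::
  "('k::field \<Rightarrow> 'g::ab_group_add \<Rightarrow> 'g) \<Rightarrow> ('g \<Rightarrow> 'g \<Rightarrow> 'g) \<Rightarrow> ('g \<Rightarrow> 'g) \<Rightarrow>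
   ('k \<Rightarrow> 'h::ab_group_add \<Rightarrow> 'h) \<Rightarrow> ('h \<Rightarrow> 'h) \<Rightarrow> ('g \<Rightarrow> 'h \<Rightarrow> 'h) \<Rightarrow> bool" where
  "hom_lie_rep sg brg alg sh alh \<rho> \<longleftrightarrow>
     vector_space sh \<and>
     Vector_Spaces.linear sh sh alh \<and>
     (\<forall>x. Vector_Spaces.linear sh sh (\<rho> x)) \<and>
     (\<forall>v. Vector_Spaces.linear sg sh (\<lambda>x. \<rho> x v)) \<and>
     (\<forall>x v. \<rho> (alg x) (alh v) = alh (\<rho> x v)) \<and>
     (\<forall>x y v. \<rho> (brg x y) (alh v) = \<rho> (alg x) (\<rho> y v) - \<rho> (alg y) (\<rho> x v))"

definition hom_lie_action ::
  "('k::field \<Rightarrow> 'g::ab_group_add \<Rightarrow> 'g) \<Rightarrow> ('g \<Rightarrow> 'g \<Rightarrow> 'g) \<Rightarrow> ('g \<Rightarrow> 'g) \<Rightarrow>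
   ('k \<Rightarrow> 'h::ab_group_add \<Rightarrow> 'h) \<Rightarrow> ('h \<Rightarrow> 'h \<Rightarrow> 'h) \<Rightarrow> ('h \<Rightarrow> 'h) \<Rightarrow>
   ('g \<Rightarrow> 'h \<Rightarrow> 'h) \<Rightarrow> bool" where
  "hom_lie_action sg brg alg sh brh alh \<rho> \<longleftrightarrow>
     hom_lie_rep sg brg alg sh alh \<rho> \<and>
     (\<forall>x u v. \<rho> (alg x) (brh u v) = brh (\<rho> x u) (alh v) + brh (alh u) (\<rho> x v)) \<and>
     (\<forall>x u v. brh (\<rho> x u) (alh v) = 0)"

definition weighted_O_operator ::
  "'k \<Rightarrow> ('k::field \<Rightarrow> 'g::ab_group_add \<Rightarrow> 'g) \<Rightarrow> ('g \<Rightarrow> 'g \<Rightarrow> 'g) \<Rightarrow> ('g \<Rightarrow> 'g) \<Rightarrow>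
   ('k \<Rightarrow> 'h::ab_group_add \<Rightarrow> 'h) \<Rightarrow> ('h \<Rightarrow> 'h \<Rightarrow> 'h) \<Rightarrow> ('h \<Rightarrow> 'h) \<Rightarrow>
   ('g \<Rightarrow> 'h \<Rightarrow> 'h) \<Rightarrow> ('h \<Rightarrow> 'g) \<Rightarrow> bool" where
  "weighted_O_operator \<kappa> sg brg alg sh brh alh \<rho> A \<longleftrightarrow>
     Vector_Spaces.linear sh sg A \<and>
     (\<forall>u. A (alh u) = alg (A u)) \<and>
     (\<forall>u v. brg (A u) (A v) = A (\<rho> (A u) v - \<rho> (A v) u + sh \<kappa> (brh u v)))"

definition hom_post_lie_algebra ::
  "('k::field \<Rightarrow> 'h::ab_group_add \<Rightarrow> 'h) \<Rightarrow> ('h \<Rightarrow> 'h \<Rightarrow> 'h) \<Rightarrow> ('h \<Rightarrow> 'h \<Rightarrow> 'h) \<Rightarrow>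
   ('h \<Rightarrow> 'h) \<Rightarrow> bool" where
  "hom_post_lie_algebra sh br st al \<longleftrightarrow>
     hom_lie_algebra sh br al \<and>
     bilinear_map sh sh sh st \<and>
     (\<forall>u v. al (st u v) = st (al u) (al v)) \<and>
     (\<forall>u v w. st (al u) (br v w) = br (st u v) (al w) + br (al v) (st u w)) \<and>
     (\<forall>u v w. st (br u v + st u v - st v u) (al w) = st (al u) (st v w) - st (al v) (st u w)) \<and>
     (\<forall>u v w. st (al u) (br v w) = br (st u v) (al w) \<and> br (st u v) (al w) = 0)"

end

theory Submission
  imports Defs
begin

lemma lin_add: "Vector_Spaces.linear s1 s2 f \<Longrightarrow> f (x + y) = f x + f y"
  by (simp add: module_hom.add linear_iff_module_hom)
lemma lin_neg: "Vector_Spaces.linear s1 s2 f \<Longrightarrow> f (- x) = - f x"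
  by (simp add: module_hom.neg linear_iff_module_hom)
lemma lin_diff: "Vector_Spaces.linear s1 s2 f \<Longrightarrow> f (x - y) = f x - f y"
  by (simp add: module_hom.diff linear_iff_module_hom)
lemma lin_scale: "Vector_Spaces.linear s1 s2 f \<Longrightarrow> f (s1 c x) = s2 c (f x)"
  by (simp add: module_hom.scale linear_iff_module_hom)
lemma lin_zero: "Vector_Spaces.linear s1 s2 f \<Longrightarrow> f 0 = 0"
  by (simp add: module_hom.zero linear_iff_module_hom)
lemma lin_vs1: "Vector_Spaces.linear s1 s2 f \<Longrightarrow> vector_space s1"
  by (simp add: Vector_Spaces.linear_iff)
lemma lin_vs2: "Vector_Spaces.linear s1 s2 f \<Longrightarrow> vector_space s2"
  by (simp add: Vector_Spaces.linear_iff)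

lemma linI: "vector_space s1 \<Longrightarrow> vector_space s2 \<Longrightarrow> (\<And>x y. f (x + y) = f x + f y)
  \<Longrightarrow> (\<And>c x. f (s1 c x) = s2 c (f x)) \<Longrightarrow> Vector_Spaces.linear s1 s2 f"
  by (simp add: Vector_Spaces.linear_iff)

lemma vs_add: "vector_space s \<Longrightarrow> s c (x + y) = s c x + s c y"
  by (simp add: module.scale_right_distrib module_iff_vector_space)
lemma vs_neg: "vector_space s \<Longrightarrow> s c (- x) = - s c x"
  by (simp add: module.scale_minus_right module_iff_vector_space)
lemma vs_diff: "vector_space s \<Longrightarrow> s c (x - y) = s c x - s c y"
  by (simp add: module.scale_right_diff_distrib module_iff_vector_space)
lemma vs_zero: "vector_space s \<Longrightarrow> s c 0 = 0"
  by (simp add: module.scale_zero_right module_iff_vector_space)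
lemma vs_mult: "vector_space s \<Longrightarrow> s a (s b x) = s (a * b) x"
  by (simp add: module.scale_scale module_iff_vector_space)
lemma vs_comm: "vector_space s \<Longrightarrow> s a (s b x) = s b (s a x)"
  by (simp add: module.scale_scale module_iff_vector_space mult.commute)

theorem mainTheorem11:
  fixes \<kappa> :: "'k::field_char_0"
    and sg :: "'k \<Rightarrow> 'g::ab_group_add \<Rightarrow> 'g" and brg :: "'g \<Rightarrow> 'g \<Rightarrow> 'g" and alg :: "'g \<Rightarrow> 'g"
    and sh :: "'k \<Rightarrow> 'h::ab_group_add \<Rightarrow> 'h" and brh :: "'h \<Rightarrow> 'h \<Rightarrow> 'h" and alh :: "'h \<Rightarrow> 'h"
    and \<rho> :: "'g \<Rightarrow> 'h \<Rightarrow> 'h" and A :: "'h \<Rightarrow> 'g"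
  assumes "hom_lie_algebra sg brg alg"
    and "hom_lie_algebra sh brh alh"
    and "hom_lie_action sg brg alg sh brh alh \<rho>"
    and "weighted_O_operator \<kappa> sg brg alg sh brh alh \<rho> A"
  shows "hom_post_lie_algebra sh (\<lambda>u v. sh \<kappa> (brh u v)) (\<lambda>u v. \<rho> (A u) v)  alh \<and>
         hom_lie_algebra sh (\<lambda>u v. \<rho> (A u) v - \<rho> (A v) u + sh \<kappa> (brh u v)) alh \<and>
         hom_lie_hom sh (\<lambda>u v. \<rho> (A u) v - \<rho> (A v) u + sh \<kappa> (brh u v)) alh sg brg alg A \<and>
         hom_lie_action sh (\<lambda>u v. \<rho> (A u) v - \<rho> (A v) u + sh \<kappa> (brh u v)) alh
           sh brh alh (\<lambda>u v. \<rho> (A u) v)"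
proof -
  note D = hom_lie_algebra_def bilinear_map_def hom_lie_action_def hom_lie_rep_def
    weighted_O_operator_def
  have VSh: "vector_space sh" using assms(2) unfolding hom_lie_algebra_def bilinear_map_def by blast
  have rl: "\<And>x. Vector_Spaces.linear sh sh (\<rho> x)" using assms(3) unfolding hom_lie_action_def hom_lie_rep_def by blast
  have rl2: "\<And>v. Vector_Spaces.linear sg sh (\<lambda>x. \<rho> x v)" using assms(3) unfolding hom_lie_action_def hom_lie_rep_def by blast
  have Al: "Vector_Spaces.linear sh sg A" using assms(4) unfolding weighted_O_operator_def by blast
  have ahl: "Vector_Spaces.linear sh sh alh" using assms(2) unfolding hom_lie_algebra_def bilinear_map_def by blast
  have bh1: "\<And>y. Vector_Spaces.linear sh sh (\<lambda>x. brh x y)" using assms(2) unfolding hom_lie_algebra_def bilinear_map_def by blast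
  have bh2: "\<And>x. Vector_Spaces.linear sh sh (\<lambda>y. brh x y)" using assms(2) unfolding hom_lie_algebra_def bilinear_map_def by blast
  have skh: "\<And>x y. brh x y = - brh y x" using assms(2) unfolding hom_lie_algebra_def bilinear_map_def by blast
  have alhb: "\<And>x y. alh (brh x y) = brh (alh x) (alh y)" using assms(2) unfolding hom_lie_algebra_def bilinear_map_def by blast
  have jach: "\<And>x y z. brh (alh x) (brh y z) + brh (alh y) (brh z x) + brh (alh z) (brh x y) = 0"
    using assms(2) unfolding hom_lie_algebra_def bilinear_map_def by blast
  have rA: "\<And>x v. \<rho> (alg x) (alh v) = alh (\<rho> x v)" using assms(3) unfolding hom_lie_action_def hom_lie_rep_def by blast
  have rB: "\<And>x y v. \<rho> (brg x y) (alh v) = \<rho> (alg x) (\<rho> y v) - \<rho> (alg y) (\<rho> x v)"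
    using assms(3) unfolding hom_lie_action_def hom_lie_rep_def by blast
  have act1: "\<And>x u v. \<rho> (alg x) (brh u v) = brh (\<rho> x u) (alh v) + brh (alh u) (\<rho> x v)"
    using assms(3) unfolding hom_lie_action_def hom_lie_rep_def by blast
  have act2: "\<And>x u v. brh (\<rho> x u) (alh v) = 0" using assms(3) unfolding hom_lie_action_def hom_lie_rep_def by blast
  have Z2: "\<And>x u v. brh (alh u) (\<rho> x v) = 0" using act2 skh by (metis neg_equal_0_iff_equal)
  have Z: "\<And>x u v. \<rho> (alg x) (brh u v) = 0" using act1 act2 Z2 by simp
  have AA: "\<And>u. A (alh u) = alg (A u)" using assms(4) unfolding weighted_O_operator_def by blast
  have AO: "\<And>u v. brg (A u) (A v) = A (\<rho> (A u) v - \<rho> (A v) u + sh \<kappa> (brh u v))"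
    using assms(4) unfolding weighted_O_operator_def by blast

  have ra: "\<And>x a b. \<rho> x (a + b) = \<rho> x a + \<rho> x b" using rl lin_add by blast
  have rd: "\<And>x a b. \<rho> x (a - b) = \<rho> x a - \<rho> x b" using rl lin_diff by blast
  have rn: "\<And>x a. \<rho> x (- a) = - \<rho> x a" using rl lin_neg by blast
  have rs: "\<And>x c a. \<rho> x (sh c a) = sh c (\<rho> x a)" using rl lin_scale by blast
  have r0: "\<And>x. \<rho> x 0 = 0" using rl lin_zero by blast
  have ba1: "\<And>a b c. brh (a + b) c = brh a c + brh b c" using bh1 lin_add by blast
  have bs1: "\<And>k a c. brh (sh k a) c = sh k (brh a c)" using bh1 lin_scale by blast
  have ba2: "\<And>a b c. brh c (a + b) = brh c a + brh c b" using bh2 lin_add by blast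
  have bd2: "\<And>a b c. brh c (a - b) = brh c a - brh c b" using bh2 lin_diff by blast
  have bs2: "\<And>k a c. brh c (sh k a) = sh k (brh c a)" using bh2 lin_scale by blast
  have aa: "\<And>a b. alh (a + b) = alh a + alh b" using ahl lin_add by blast
  have as: "\<And>k a. alh (sh k a) = sh k (alh a)" using ahl lin_scale by blast
  have Aa: "\<And>a b. A (a + b) = A a + A b" using Al lin_add by blast
  have As: "\<And>k a. A (sh k a) = sg k (A a)" using Al lin_scale by blast
  have rla: "\<And>x y v. \<rho> (x + y) v = \<rho> x v + \<rho> y v" using rl2 lin_add by fastforce
  have rls: "\<And>k x v. \<rho> (sg k x) v = sh k (\<rho> x v)" using rl2 lin_scale by fastforce
  have sa: "\<And>k a b. sh k (a + b) = sh k a + sh k b" using VSh vs_add by blast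
  have sd: "\<And>k a b. sh k (a - b) = sh k a - sh k b" using VSh vs_diff by blast
  have sn: "\<And>k a. sh k (- a) = - sh k a" using VSh vs_neg by blast
  have s0: "\<And>k. sh k 0 = 0" using VSh vs_zero by blast
  have sc: "\<And>k l a. sh k (sh l a) = sh l (sh k a)" using VSh vs_comm by blast
  have rAl: "\<And>v. Vector_Spaces.linear sh sh (\<lambda>u. \<rho> (A u) v)"
    using Vector_Spaces.linear_compose[OF Al rl2] by (simp add: o_def)
  have lA: "\<And>v. Vector_Spaces.linear sh sh (\<lambda>u. \<rho> (A u) v - \<rho> (A v) u + sh \<kappa> (brh u v))"
  proof -
    fix v
    show "Vector_Spaces.linear sh sh (\<lambda>u. \<rho> (A u) v - \<rho> (A v) u + sh \<kappa> (brh u v))"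
      by (rule linI[OF VSh VSh]) (simp_all add: Aa rla ra sa sd ba1 As rls rs bs1 sc algebra_simps)
  qed
  have lB: "\<And>u. Vector_Spaces.linear sh sh (\<lambda>v. \<rho> (A u) v - \<rho> (A v) u + sh \<kappa> (brh u v))"
  proof -
    fix u
    show "Vector_Spaces.linear sh sh (\<lambda>v. \<rho> (A u) v - \<rho> (A v) u + sh \<kappa> (brh u v))"
      by (rule linI[OF VSh VSh]) (simp_all add: Aa rla ra sa sd ba2 As rls rs bs2 sc algebra_simps)
  qed
  have P1: "hom_post_lie_algebra sh (\<lambda>u v. sh \<kappa> (brh u v)) (\<lambda>u v. \<rho> (A u) v)  alh"
  proof -
    have L1: "hom_lie_algebra sh (\<lambda>u v. sh \<kappa> (brh u v)) alh"
    proof -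
      have "\<And>y. Vector_Spaces.linear sh sh (\<lambda>x. sh \<kappa> (brh x y))"
        by (rule linI[OF VSh VSh]) (simp_all add: ba1 bs1 sa sc)
      moreover have "\<And>x. Vector_Spaces.linear sh sh (\<lambda>y. sh \<kappa> (brh x y))"
        by (rule linI[OF VSh VSh]) (simp_all add: ba2 bs2 sa sc)
      moreover have "\<And>x y. sh \<kappa> (brh x y) = - sh \<kappa> (brh y x)"
        using skh sn by metis
      moreover have "\<And>x y. alh (sh \<kappa> (brh x y)) = sh \<kappa> (brh (alh x) (alh y))"
        by (simp add: as alhb)
      moreover have "\<And>x y z. sh \<kappa> (brh (alh x) (sh \<kappa> (brh y z))) + sh \<kappa> (brh (alh y) (sh \<kappa> (brh z x)))
          + sh \<kappa> (brh (alh z) (sh \<kappa> (brh x y))) = 0"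
      proof -
        fix x y z
        have "sh \<kappa> (sh \<kappa> (brh (alh x) (brh y z) + brh (alh y) (brh z x) + brh (alh z) (brh x y))) = 0"
          using jach s0 by simp
        then show "sh \<kappa> (brh (alh x) (sh \<kappa> (brh y z))) + sh \<kappa> (brh (alh y) (sh \<kappa> (brh z x)))
          + sh \<kappa> (brh (alh z) (sh \<kappa> (brh x y))) = 0" by (simp add: bs2 sa)
      qed
      ultimately show ?thesis using VSh ahl unfolding hom_lie_algebra_def bilinear_map_def by blast
    qed
    have "bilinear_map sh sh sh (\<lambda>u v. \<rho> (A u) v)"
      unfolding bilinear_map_def using rAl rl by blast
    moreover have "\<And>u v. alh (\<rho> (A u) v) = \<rho> (A (alh u)) (alh v)" by (simp add: AA rA)
    moreover have "\<And>u v w. \<rho> (A (alh u)) (sh \<kappa> (brh v w)) = 0" by (simp add: AA rs Z s0)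
    moreover have "\<And>u v w. sh \<kappa> (brh (\<rho> (A u) v) (alh w)) = 0" by (simp add: act2 s0)
    moreover have "\<And>u v w. \<rho> (A (sh \<kappa> (brh u v) + \<rho> (A u) v - \<rho> (A v) u)) (alh w)
        = \<rho> (A (alh u)) (\<rho> (A v) w) - \<rho> (A (alh v)) (\<rho> (A u) w)"
    proof -
      fix u v w
      have "sh \<kappa> (brh u v) + \<rho> (A u) v - \<rho> (A v) u = \<rho> (A u) v - \<rho> (A v) u + sh \<kappa> (brh u v)"
        by (simp add: algebra_simps)
      note e = this
      show "\<rho> (A (sh \<kappa> (brh u v) + \<rho> (A u) v - \<rho> (A v) u)) (alh w)
        = \<rho> (A (alh u)) (\<rho> (A v) w) - \<rho> (A (alh v)) (\<rho> (A u) w)"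
        by (simp only: e) (simp add: AO[symmetric] rB AA)
    qed
    moreover have "\<And>u v w. sh \<kappa> (brh (alh v) (\<rho> (A u) w)) = 0" by (simp add: Z2 s0)
    ultimately show ?thesis using L1 unfolding hom_post_lie_algebra_def by simp
  qed
  have J: "\<And>u v w. \<rho> (A (alh u)) (\<rho> (A v) w - \<rho> (A w) v + sh \<kappa> (brh v w))
      = \<rho> (alg (A u)) (\<rho> (A v) w) - \<rho> (alg (A u)) (\<rho> (A w) v)"
    by (simp add: AA ra rd rs Z s0)
  have J2: "\<And>u v w. \<rho> (A (\<rho> (A v) w - \<rho> (A w) v + sh \<kappa> (brh v w))) (alh u)
      = \<rho> (alg (A v)) (\<rho> (A w) u) - \<rho> (alg (A w)) (\<rho> (A v) u)"
    by (simp add: AO[symmetric] rB)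
  have J3: "\<And>u v w. brh (alh u) (\<rho> (A v) w - \<rho> (A w) v + sh \<kappa> (brh v w))
      = sh \<kappa> (brh (alh u) (brh v w))"
    by (simp add: ba2 bd2 bs2 Z2)
  have P2: "hom_lie_algebra sh (\<lambda>u v. \<rho> (A u) v - \<rho> (A v) u + sh \<kappa> (brh u v)) alh"
  proof -
    have "\<And>x y. \<rho> (A x) y - \<rho> (A y) x + sh \<kappa> (brh x y) = - (\<rho> (A y) x - \<rho> (A x) y + sh \<kappa> (brh y x))"
      using skh sn by (metis minus_diff_eq minus_add_distrib add.commute)
    moreover have "\<And>x y. alh (\<rho> (A x) y - \<rho> (A y) x + sh \<kappa> (brh x y)) =
       \<rho> (A (alh x)) (alh y) - \<rho> (A (alh y)) (alh x) + sh \<kappa> (brh (alh x) (alh y))"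
      using ahl by (simp add: lin_add lin_diff as alhb AA rA)
    moreover have "\<And>x y z. (\<lambda>u v. \<rho> (A u) v - \<rho> (A v) u + sh \<kappa> (brh u v)) (alh x) ((\<lambda>u v. \<rho> (A u) v - \<rho> (A v) u + sh \<kappa> (brh u v)) y z)
       + (\<lambda>u v. \<rho> (A u) v - \<rho> (A v) u + sh \<kappa> (brh u v)) (alh y) ((\<lambda>u v. \<rho> (A u) v - \<rho> (A v) u + sh \<kappa> (brh u v)) z x)
       + (\<lambda>u v. \<rho> (A u) v - \<rho> (A v) u + sh \<kappa> (brh u v)) (alh z) ((\<lambda>u v. \<rho> (A u) v - \<rho> (A v) u + sh \<kappa> (brh u v)) x y) = 0"
    proof -
      fix x y z
      have jj: "sh \<kappa> (sh \<kappa> (brh (alh x) (brh y z))) + sh \<kappa> (sh \<kappa> (brh (alh y) (brh z x)))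
          + sh \<kappa> (sh \<kappa> (brh (alh z) (brh x y))) = 0"
        using jach[of x y z] s0 sa by metis
      show "?thesis x y z" using jj by (simp only: J J2 J3) (simp add: algebra_simps)
    qed
    ultimately show ?thesis using VSh ahl lA lB unfolding hom_lie_algebra_def bilinear_map_def by blast
  qed
  have P3: "hom_lie_hom sh (\<lambda>u v. \<rho> (A u) v - \<rho> (A v) u + sh \<kappa> (brh u v)) alh sg brg alg A"
    unfolding hom_lie_hom_def using Al AA AO by simp
  have P4: "hom_lie_action sh (\<lambda>u v. \<rho> (A u) v - \<rho> (A v) u + sh \<kappa> (brh u v)) alh
           sh brh alh (\<lambda>u v. \<rho> (A u) v)"
    unfolding hom_lie_action_def hom_lie_rep_def
    using VSh ahl rl rAl by (simp add: AA rA act1 act2 AO[symmetric] rB)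
  show ?thesis using P1 P2 P3 P4 by blast
qed

end
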